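(* Let $d_\rho,d_v\ge1$ and let $X$ be a finite set. Let complex arrays $U^{ab}_{ij}$, $R^{yx}_{ab}$, $V^{yx}_{ij}$ and vectors $(e_x)_{x\in X}$, $(u_x)_{x\in X}$ be given (indices $a,b\in\{1,\dots,d_\rho\}$, $i,j\in\{1,\dots,d_v\}$, $x,y\in X$) satisfying, for all indices: (1) $\sum_{z\in X}R^{yz}_{ab}V^{zx}_{ij}=\sum_{z\in X}\sum_{k=1}^{d_v}\sum_{c=1}^{d_\rho}V^{yz}_{ik}R^{zx}_{ac}U^{cb}_{kj}$; (2) $\sum_{y}e_yV^{yx}_{ij}=\delta_{ij}e_x$; (3) $\sum_xR^{yx}_{ab}u_x=\delta_{ab}u_y$; (4) $\sum_xe_xu_x=1$. For $n\ge1$ define $$M_n(a_1,i_1,\dots,a_n,i_n;b_1,j_1,\dots,b_n,j_n)=\sum_{x_0,\dots,x_{2n}\in X}e_{x_0}\prod_{m=1}^{n}\Big(R^{x_{2m-2}x_{2m-1}}_{a_mb_m}V^{x_{2m-1}x_{2m}}_{i_mj_m}\Big)u_{x_{2n}},$$ and define $T_n$ recursively by $T_1(a_1,i_1;b_1,j_1)=U^{a_1b_1}_{i_1j_1}$ and, for $n\ge2$, $$T_n(a_1,i_1,\dots,a_n,i_n;b_1,j_1,\dots,b_n,j_n)=\sum_{c_1,\dots,c_{n-1}}\sum_{k_2,\dots,k_n}T_{n-1}(a_1,i_2,a_2,i_3,\dots,a_{n-1},i_n;c_1,k_2,c_2,k_3,\dots,c_{n-1},k_n)\prod_{m=1}^nU^{c_mb_m}_{k_mj_m},$$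 with the conventions $k_1:=i_1$, $c_n:=a_n$ (sums over $c_m\in\{1,\dots,d_\rho\}$, $k_m\in\{1,\dots,d_v\}$). Then $M_n=T_n$ for every $n\ge1$.
   Context: $T_n$ is the contraction of a triangular brickwork tensor network built from $n(n+1)/2$ copies of the four-index tensor $U$ (a "light cone" of two-site gates with inputs $(b_m,j_m)$ and outputs $(i,a)$), and $M_n$ is a matrix product operator of bond dimension $|X|$ with left boundary vector $e$ and right boundary vector $u$. *)

theory Defs
  imports Complex_Main
begin

text \<open>Index conventions: the bond index set {1..d_rho} is a finite type 'r,
 the physical index set {1..d_v} is a finite type 'v, and X is a finite type 'x.
 Arrays: U a b i j = U^{ab}_{ij}, R y x a b = R^{yx}_{ab}, V y x i j = V^{yx}_{ij}.
 Multi-indices (a_1..a_n), (i_1..i_n), (b_1..b_n), (j_1..j_n) are lists of length n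
 (0-based list positions: a_m = as ! (m-1)).\<close>

definition M ::
  "('x::finite \<Rightarrow> complex) \<Rightarrow> ('x \<Rightarrow> 'x \<Rightarrow> 'r \<Rightarrow> 'r \<Rightarrow> complex) \<Rightarrow>
   ('x \<Rightarrow> 'x \<Rightarrow> 'v \<Rightarrow> 'v \<Rightarrow> complex) \<Rightarrow> ('x \<Rightarrow> complex) \<Rightarrow> nat \<Rightarrow>
   'r list \<Rightarrow> 'v list \<Rightarrow> 'r list \<Rightarrow> 'v list \<Rightarrow> complex" where
  "M e R V u n as is bs js =
     (\<Sum>xs\<in>{xs::'x list. length xs = 2 * n + 1}.
        e (xs ! 0) *
        (\<Prod>m\<in>{1..n}. R (xs ! (2*m - 2)) (xs ! (2*m - 1)) (as ! (m - 1)) (bs ! (m - 1))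
                       * V (xs ! (2*m - 1)) (xs ! (2*m)) (is ! (m - 1)) (js ! (m - 1)))
        * u (xs ! (2 * n)))"

fun T ::
  "('r::finite \<Rightarrow> 'r \<Rightarrow> 'v::finite \<Rightarrow> 'v \<Rightarrow> complex) \<Rightarrow> nat \<Rightarrow>
   'r list \<Rightarrow> 'v list \<Rightarrow> 'r list \<Rightarrow> 'v list \<Rightarrow> complex" where
  "T U 0 as is bs js = 0"
| "T U (Suc 0) as is bs js = U (as ! 0) (bs ! 0) (is ! 0) (js ! 0)"
| "T U (Suc (Suc n)) as is bs js =
     (\<Sum>cs\<in>{cs::'r list. length cs = Suc n}. \<Sum>ks\<in>{ks::'v list. length ks = Suc n}.
        T U (Suc n) (take (Suc n) as) (tl is) cs ks *
        (\<Prod>m<Suc (Suc n). U ((cs @ [as ! Suc n]) ! m) (bs ! m) ((is ! 0 # ks) ! m) (js ! m)))"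

end

theory Submission
  imports Defs
begin


lemma fin_len: "finite {xs::('a::finite) list. length xs = n}"
  using finite_lists_length_eq[OF finite_UNIV, of n] by simp

lemma sum_len_Suc:
  "(\<Sum>xs\<in>{xs::('a::finite) list. length xs = Suc n}. f xs)
   = (\<Sum>x\<in>UNIV. \<Sum>xs\<in>{xs. length xs = n}. f (x # xs))"
proof -
  have e: "{xs::'a list. length xs = Suc n} = (\<lambda>(x,xs). x # xs) ` (UNIV \<times> {xs. length xs = n})"
    by (auto simp: length_Suc_conv image_iff)
  have i: "inj_on (\<lambda>(x,xs). x # xs) (UNIV \<times> {xs::'a list. length xs = n})"
    by (auto simp: inj_on_def)
  show ?thesis
    unfolding e by (simp only: sum.reindex[OF i] o_def) (simp add: sum.cartesian_product case_prod_unfold)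
qed

lemma sum_len_snoc:
  "(\<Sum>xs\<in>{xs::('a::finite) list. length xs = Suc n}. f xs)
   = (\<Sum>x\<in>UNIV. \<Sum>xs\<in>{xs. length xs = n}. f (xs @ [x]))"
proof -
  have e: "{xs::'a list. length xs = Suc n} = (\<lambda>(x,xs). xs @ [x]) ` (UNIV \<times> {xs. length xs = n})"
  proof (auto simp: image_iff)
    fix xs :: "'a list" assume "length xs = Suc n"
    then show "\<exists>x ys. length ys = n \<and> xs = ys @ [x]"
      by (metis append_butlast_last_id diff_Suc_1 length_butlast length_greater_0_conv zero_less_Suc)
  qed
  have i: "inj_on (\<lambda>(x,xs). xs @ [x]) (UNIV \<times> {xs::'a list. length xs = n})"
    by (auto simp: inj_on_def)
  show ?thesis
    unfolding e by (simp only: sum.reindex[OF i] o_def) (simp add: sum.cartesian_product case_prod_unfold)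
qed

definition vm :: "('x::finite \<Rightarrow> complex) \<Rightarrow> ('x \<Rightarrow> 'x \<Rightarrow> complex) \<Rightarrow> 'x \<Rightarrow> complex" where
  "vm w A = (\<lambda>x. \<Sum>y\<in>UNIV. w y * A y x)"

definition mv :: "('x::finite \<Rightarrow> 'x \<Rightarrow> complex) \<Rightarrow> ('x \<Rightarrow> complex) \<Rightarrow> 'x \<Rightarrow> complex" where
  "mv A v = (\<lambda>y. \<Sum>x\<in>UNIV. A y x * v x)"

fun chain :: "('x::finite \<Rightarrow> complex) \<Rightarrow> ('x \<Rightarrow> 'x \<Rightarrow> complex) list \<Rightarrow> ('x \<Rightarrow> complex) \<Rightarrow> complex" where
  "chain w [] v = (\<Sum>x\<in>UNIV. w x * v x)"
| "chain w (A # As) v = chain (vm w A) As v"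

lemma chain_lin:
  assumes "finite K"
  shows "chain (\<lambda>x. \<Sum>k\<in>K. g k * f k x) As v = (\<Sum>k\<in>K. g k * chain (f k) As v)"
proof (induction As arbitrary: f)
  case Nil
  then show ?case by (simp add: sum_distrib_left sum_distrib_right mult_ac sum.swap[of _ K])
next
  case (Cons A As)
  have "vm (\<lambda>x. \<Sum>k\<in>K. g k * f k x) A = (\<lambda>x. \<Sum>k\<in>K. g k * vm (f k) A x)"
    by (auto simp: vm_def sum_distrib_left sum_distrib_right mult_ac intro: sum.swap)
  then show ?case using Cons by simp
qed

lemma chain_snoc: "chain w (As @ [B]) v = chain w As (mv B v)"
  by (induction As arbitrary: w) (auto simp: vm_def mv_def sum_distrib_left sum_distrib_right mult_ac intro: sum.swap)

lemma chain_zero: "chain (\<lambda>x. 0) As v = 0"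
  using chain_lin[of "{}" "\<lambda>_. 0" "\<lambda>_ _. 0" As v] by simp

lemma chain_zero_r: "chain w As (\<lambda>x. 0) = 0"
  by (induction As arbitrary: w) auto

lemma chain_paths:
  "chain w As v = (\<Sum>xs\<in>{xs. length xs = Suc (length As)}.
      w (xs ! 0) * (\<Prod>m<length As. (As ! m) (xs ! m) (xs ! Suc m)) * v (xs ! length As))"
proof (induction As arbitrary: w)
  case Nil
  have "{xs::'a list. length xs = 0} = {[]}" by auto
  then show ?case by (simp add: sum_len_Suc)
next
  case (Cons A As)
  show ?case
    apply (simp only: chain.simps Cons length_Cons)
    apply (subst sum_len_Suc[where n="Suc (length As)"])
    apply (simp only: prod.lessThan_Suc_shift)
    apply (simp add: vm_def sum_distrib_left sum_distrib_right mult_ac)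
    apply (rule sum.swap)
    done
qed



fun RVs :: "('x \<Rightarrow> 'x \<Rightarrow> 'r \<Rightarrow> 'r \<Rightarrow> complex) \<Rightarrow> ('x \<Rightarrow> 'x \<Rightarrow> 'v \<Rightarrow> 'v \<Rightarrow> complex) \<Rightarrow>
   'r list \<Rightarrow> 'v list \<Rightarrow> 'r list \<Rightarrow> 'v list \<Rightarrow> ('x \<Rightarrow> 'x \<Rightarrow> complex) list" where
  "RVs R V (a # as) (i # is) (b # bs) (j # js) = (\<lambda>y x. R y x a b) # (\<lambda>y x. V y x i j) # RVs R V as is bs js"
| "RVs R V _ _ _ _ = []"

fun VRs :: "('x \<Rightarrow> 'x \<Rightarrow> 'r \<Rightarrow> 'r \<Rightarrow> complex) \<Rightarrow> ('x \<Rightarrow> 'x \<Rightarrow> 'v \<Rightarrow> 'v \<Rightarrow> complex) \<Rightarrow>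
   'v list \<Rightarrow> 'v list \<Rightarrow> 'r list \<Rightarrow> 'r list \<Rightarrow> ('x \<Rightarrow> 'x \<Rightarrow> complex) list" where
  "VRs R V (i # is) (k # ks) (a # as) (c # cs) = (\<lambda>y x. V y x i k) # (\<lambda>y x. R y x a c) # VRs R V is ks as cs"
| "VRs R V _ _ _ _ = []"

lemma chain_sum:
  assumes "finite K"
  shows "chain (\<lambda>x. \<Sum>k\<in>K. f k x) As v = (\<Sum>k\<in>K. chain (f k) As v)"
  using chain_lin[OF assms, of "\<lambda>_. 1" f As v] by simp

lemma perm4:
  "(\<Sum>y\<in>A. \<Sum>z\<in>B. \<Sum>k\<in>C. \<Sum>c\<in>D. F y z k c) = (\<Sum>k\<in>C. \<Sum>c\<in>D. \<Sum>z\<in>B. \<Sum>y\<in>A. F y z k c)"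
proof -
  have "(\<Sum>y\<in>A. \<Sum>z\<in>B. \<Sum>k\<in>C. \<Sum>c\<in>D. F y z k c) = (\<Sum>z\<in>B. \<Sum>y\<in>A. \<Sum>k\<in>C. \<Sum>c\<in>D. F y z k c)"
    by (rule sum.swap)
  also have "\<dots> = (\<Sum>z\<in>B. \<Sum>k\<in>C. \<Sum>y\<in>A. \<Sum>c\<in>D. F y z k c)"
    by (rule sum.cong[OF refl], rule sum.swap)
  also have "\<dots> = (\<Sum>z\<in>B. \<Sum>k\<in>C. \<Sum>c\<in>D. \<Sum>y\<in>A. F y z k c)"
    by (rule sum.cong[OF refl], rule sum.cong[OF refl], rule sum.swap)
  also have "\<dots> = (\<Sum>k\<in>C. \<Sum>z\<in>B. \<Sum>c\<in>D. \<Sum>y\<in>A. F y z k c)"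
    by (rule sum.swap)
  also have "\<dots> = (\<Sum>k\<in>C. \<Sum>c\<in>D. \<Sum>z\<in>B. \<Sum>y\<in>A. F y z k c)"
    by (rule sum.cong[OF refl], rule sum.swap)
  finally show ?thesis .
qed

lemma swap_step:
  fixes U :: "'r::finite \<Rightarrow> 'r \<Rightarrow> 'v::finite \<Rightarrow> 'v \<Rightarrow> complex"
    and R :: "'x::finite \<Rightarrow> 'x \<Rightarrow> 'r \<Rightarrow> 'r \<Rightarrow> complex"
    and V :: "'x \<Rightarrow> 'x \<Rightarrow> 'v \<Rightarrow> 'v \<Rightarrow> complex"
  assumes h1: "\<And>y x a b i j. (\<Sum>z\<in>UNIV. R y z a b * V z x i j)
                 = (\<Sum>z\<in>UNIV. \<Sum>k\<in>UNIV. \<Sum>c\<in>UNIV. V y z i k * R z x a c * U c b k j)"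
  shows "vm (vm w (\<lambda>y x. R y x a b)) (\<lambda>y x. V y x i j)
     = (\<lambda>x. \<Sum>k\<in>UNIV. \<Sum>c\<in>UNIV. U c b k j * vm (vm w (\<lambda>y x. V y x i k)) (\<lambda>y x. R y x a c) x)"
proof
  fix x
  have "vm (vm w (\<lambda>y x. R y x a b)) (\<lambda>y x. V y x i j) x
      = (\<Sum>y\<in>UNIV. w y * (\<Sum>z\<in>UNIV. R y z a b * V z x i j))"
    unfolding vm_def by (simp add: sum_distrib_left sum_distrib_right mult.assoc) (rule sum.swap)
  also have "\<dots> = (\<Sum>y\<in>UNIV. w y * (\<Sum>z\<in>UNIV. \<Sum>k\<in>UNIV. \<Sum>c\<in>UNIV. V y z i k * R z x a c * U c b k j))"
    by (simp add: h1)
  also have "\<dots> = (\<Sum>k\<in>UNIV. \<Sum>c\<in>UNIV. U c b k j * vm (vm w (\<lambda>y x. V y x i k)) (\<lambda>y x. R y x a c) x)"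
    unfolding vm_def
    apply (simp add: sum_distrib_left sum_distrib_right mult.assoc)
    apply (subst perm4)
    apply (simp add: mult_ac)
    done
  finally show "vm (vm w (\<lambda>y x. R y x a b)) (\<lambda>y x. V y x i j) x = (\<Sum>k\<in>UNIV. \<Sum>c\<in>UNIV. U c b k j * vm (vm w (\<lambda>y x. V y x i k)) (\<lambda>y x. R y x a c) x)" .
qed

lemma RV_expand:
  fixes U :: "'r::finite \<Rightarrow> 'r \<Rightarrow> 'v::finite \<Rightarrow> 'v \<Rightarrow> complex"
    and R :: "'x::finite \<Rightarrow> 'x \<Rightarrow> 'r \<Rightarrow> 'r \<Rightarrow> complex"
    and V :: "'x \<Rightarrow> 'x \<Rightarrow> 'v \<Rightarrow> 'v \<Rightarrow> complex"
  assumes h1: "\<And>y x a b i j. (\<Sum>z\<in>UNIV. R y z a b * V z x i j)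
                 = (\<Sum>z\<in>UNIV. \<Sum>k\<in>UNIV. \<Sum>c\<in>UNIV. V y z i k * R z x a c * U c b k j)"
  shows "length is = length as \<Longrightarrow> length bs = length as \<Longrightarrow> length js = length as \<Longrightarrow>
    chain w (RVs R V as is bs js) v =
    (\<Sum>cs\<in>{cs. length cs = length as}. \<Sum>ks\<in>{ks. length ks = length as}.
       chain w (VRs R V is ks as cs) v * (\<Prod>m<length as. U (cs ! m) (bs ! m) (ks ! m) (js ! m)))"
proof (induction as arbitrary: "is" bs js w)
  case Nil
  have e1: "{cs::'r list. length cs = 0} = {[]}" by auto
  have e2: "{cs::'v list. length cs = 0} = {[]}" by auto
  from Nil show ?case by (simp add: e1 e2)
next
  case (Cons a as)
  obtain i is' where ii: "is = i # is'" "length is' = length as" using Cons.prems by (cases "is") auto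
  obtain b bs' where bb: "bs = b # bs'" "length bs' = length as" using Cons.prems by (cases bs) auto
  obtain j js' where jj: "js = j # js'" "length js' = length as" using Cons.prems by (cases js) auto
  let ?P = "\<lambda>cs ks. (\<Prod>m<length as. U (cs ! m) (bs' ! m) (ks ! m) (js' ! m))"
  have "chain w (RVs R V (a # as) is bs js) v
     = chain (vm (vm w (\<lambda>y x. R y x a b)) (\<lambda>y x. V y x i j)) (RVs R V as is' bs' js') v"
    by (simp add: ii bb jj)
  also have "\<dots> = (\<Sum>k\<in>UNIV. \<Sum>c\<in>UNIV. U c b k j *
       chain (vm (vm w (\<lambda>y x. V y x i k)) (\<lambda>y x. R y x a c)) (RVs R V as is' bs' js') v)"
    apply (subst swap_step[OF h1])
    apply (subst chain_sum, simp)
    apply (subst chain_lin, simp)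
    apply (rule refl)
    done
  also have "\<dots> = (\<Sum>k\<in>UNIV. \<Sum>c\<in>UNIV. U c b k j *
       (\<Sum>cs\<in>{cs. length cs = length as}. \<Sum>ks\<in>{ks. length ks = length as}.
         chain (vm (vm w (\<lambda>y x. V y x i k)) (\<lambda>y x. R y x a c)) (VRs R V is' ks as cs) v * ?P cs ks))"
    using Cons.IH[OF ii(2) bb(2) jj(2)] by simp
  also have "\<dots> = (\<Sum>c\<in>UNIV. \<Sum>cs\<in>{cs. length cs = length as}. \<Sum>k\<in>UNIV. \<Sum>ks\<in>{ks. length ks = length as}.
         chain (vm (vm w (\<lambda>y x. V y x i k)) (\<lambda>y x. R y x a c)) (VRs R V is' ks as cs) v * (U c b k j * ?P cs ks))"
    apply (simp only: sum_distrib_left)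
    apply (subst sum.swap[where A=UNIV and B=UNIV])
    apply (rule sum.cong[OF refl])
    apply (subst sum.swap[where A=UNIV and B="{cs. length cs = length as}"])
    apply (simp add: mult_ac)
    done
  also have "\<dots> = (\<Sum>cs\<in>{cs. length cs = length (a # as)}. \<Sum>ks\<in>{ks. length ks = length (a # as)}.
       chain w (VRs R V is ks (a # as) cs) v * (\<Prod>m<length (a # as). U (cs ! m) (bs ! m) (ks ! m) (js ! m)))"
    apply (simp only: length_Cons sum_len_Suc)
    apply (simp add: ii bb jj prod.lessThan_Suc_shift del: prod.lessThan_Suc)
    done
  finally show ?case .
qed



lemma VRs_snoc:
  "length is = length as \<Longrightarrow> length ks = length as \<Longrightarrow> length cs = length as \<Longrightarrow>
   VRs R V (i # is) (k # ks) (as @ [a]) (cs @ [c]) =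
     (\<lambda>y x. V y x i k) # RVs R V as is cs ks @ [(\<lambda>y x. R y x a c)]"
proof (induction as arbitrary: i k "is" ks cs)
  case Nil
  then show ?case by simp
next
  case (Cons a1 as)
  then obtain i2 is' k2 ks' c1 cs' where "is = i2 # is'" "ks = k2 # ks'" "cs = c1 # cs'"
    by (metis length_Suc_conv)
  with Cons show ?case by simp
qed

lemma prod_pairs: "(\<Prod>m<2*(n::nat). f m) = (\<Prod>m\<in>{1..n}. f (2*m-2) * f (2*m-1))"
proof (induction n)
  case 0
  then show ?case by simp
next
  case (Suc n)
  have "(\<Prod>m<2*Suc n. f m) = (\<Prod>m<2*n. f m) * (f (2*n) * f (2*n+1))"
    by (simp add: mult_ac)
  then show ?case using Suc by (simp add: prod.cl_ivl_Suc)
qed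

lemma RVs_len: "length is = length as \<Longrightarrow> length bs = length as \<Longrightarrow> length js = length as \<Longrightarrow>
   length (RVs R V as is bs js) = 2 * length as"
proof (induction as arbitrary: "is" bs js)
  case Nil then show ?case by simp
next
  case (Cons a as)
  then obtain i is' b bs' j js' where "is = i # is'" "bs = b # bs'" "js = j # js'"
    by (metis length_Suc_conv)
  with Cons show ?case by simp
qed

lemma RVs_nth: "length is = length as \<Longrightarrow> length bs = length as \<Longrightarrow> length js = length as \<Longrightarrow>
   m < length as \<Longrightarrow>
   RVs R V as is bs js ! (2*m) = (\<lambda>y x. R y x (as!m) (bs!m)) \<and>
   RVs R V as is bs js ! (2*m+1) = (\<lambda>y x. V y x (is!m) (js!m))"
proof (induction as arbitrary: "is" bs js m)
  case Nil then show ?case by simp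
next
  case (Cons a as)
  then obtain i is' b bs' j js' where e: "is = i # is'" "bs = b # bs'" "js = j # js'"
    by (metis length_Suc_conv)
  show ?case
  proof (cases m)
    case 0 then show ?thesis by (simp add: e)
  next
    case (Suc m')
    have "2 * m = Suc (Suc (2*m'))" "2*m+1 = Suc (Suc (2*m'+1))" using Suc by auto
    with Cons.IH[of is' bs' js' m'] Cons.prems Suc show ?thesis by (simp add: e Suc)
  qed
qed

lemma collapse1:
  "(\<Sum>k::('a::finite)\<in>UNIV. \<Sum>ks\<in>KS. if k = i then G k ks else 0) = (\<Sum>ks\<in>KS. G i (ks::'b list))"
  by (simp add: sum.swap[where A=UNIV] sum.delta)

lemma collapse2:
  "(\<Sum>c::('a::finite)\<in>UNIV. \<Sum>cs\<in>S. if c = a then G c cs else 0) = (\<Sum>cs\<in>S. G a (cs::'b list))"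
  by (simp add: sum.swap[where A=UNIV] sum.delta)



lemma sum_if_out: "(\<Sum>x\<in>S. if P then f x else 0) = (if P then (\<Sum>x\<in>S. f x) else 0)"
  by (cases P) auto

lemma M_chain:
  assumes "length as = n" "length is = n" "length bs = n" "length js = n"
  shows "M e R V u n as is bs js = chain e (RVs R V as is bs js) u"
proof -
  have len: "length (RVs R V as is bs js) = 2 * n" using RVs_len assms by metis
  have P: "(\<Prod>m<2*n. (RVs R V as is bs js ! m) (xs ! m) (xs ! Suc m)) =
     (\<Prod>m\<in>{1..n}. R (xs ! (2*m - 2)) (xs ! (2*m - 1)) (as ! (m - 1)) (bs ! (m - 1))
                       * V (xs ! (2*m - 1)) (xs ! (2*m)) (is ! (m - 1)) (js ! (m - 1)))" for xs
  proof -
    have "(\<Prod>m<2*n. (RVs R V as is bs js ! m) (xs ! m) (xs ! Suc m)) =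
      (\<Prod>m\<in>{1..n}. (RVs R V as is bs js ! (2*m-2)) (xs ! (2*m-2)) (xs ! Suc (2*m-2)) *
                     (RVs R V as is bs js ! (2*m-1)) (xs ! (2*m-1)) (xs ! Suc (2*m-1)))"
      by (rule prod_pairs)
    also have "\<dots> = (\<Prod>m\<in>{1..n}. R (xs ! (2*m - 2)) (xs ! (2*m - 1)) (as ! (m - 1)) (bs ! (m - 1))
                       * V (xs ! (2*m - 1)) (xs ! (2*m)) (is ! (m - 1)) (js ! (m - 1)))"
    proof (rule prod.cong[OF refl])
      fix m assume m: "m \<in> {1..n}"
      then have m1: "m - 1 < length as" using assms by auto
      have e1: "2*m-2 = 2*(m-1)" "2*m-1 = 2*(m-1)+1" "Suc (2*m-2) = 2*m-1" "Suc (2*m-1) = 2*m"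
        using m by auto
      have e2: "2*m = Suc (Suc (2*(m-1)))" using m by auto
      show "(RVs R V as is bs js ! (2*m-2)) (xs ! (2*m-2)) (xs ! Suc (2*m-2)) *
            (RVs R V as is bs js ! (2*m-1)) (xs ! (2*m-1)) (xs ! Suc (2*m-1)) =
            R (xs ! (2*m - 2)) (xs ! (2*m - 1)) (as ! (m - 1)) (bs ! (m - 1))
                       * V (xs ! (2*m - 1)) (xs ! (2*m)) (is ! (m - 1)) (js ! (m - 1))"
        using RVs_nth[OF _ _ _ m1, of "is" bs js R V] assms
        unfolding e1 using m by (simp add: e2)
    qed
    finally show ?thesis .
  qed
  show ?thesis
    unfolding M_def chain_paths len
    by (rule sum.cong) (auto simp: P)
qed

lemma chain_collapse:
  assumes h2: "\<And>x i j. (\<Sum>y\<in>UNIV. e y * V y x i j) = (if i = j then e x else 0)"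
    and h3: "\<And>y a b. (\<Sum>x\<in>UNIV. R y x a b * u x) = (if a = b then u y else 0)"
  shows "chain e ((\<lambda>y x. V y x i k) # As @ [(\<lambda>y x. R y x a c)]) u =
    (if c = a then if k = i then chain e As u else 0 else 0)"
proof -
  have v: "vm e (\<lambda>y x. V y x i k) = (if k = i then e else (\<lambda>x. 0))"
    by (auto simp: vm_def h2)
  have r: "mv (\<lambda>y x. R y x a c) u = (if c = a then u else (\<lambda>x. 0))"
    by (auto simp: mv_def h3)
  show ?thesis by (simp add: chain_snoc v r chain_zero chain_zero_r)
qed



lemma step:
  fixes U :: "'r::finite \<Rightarrow> 'r \<Rightarrow> 'v::finite \<Rightarrow> 'v \<Rightarrow> complex"
    and R :: "'x::finite \<Rightarrow> 'x \<Rightarrow> 'r \<Rightarrow> 'r \<Rightarrow> complex"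
    and V :: "'x \<Rightarrow> 'x \<Rightarrow> 'v \<Rightarrow> 'v \<Rightarrow> complex"
    and e u :: "'x \<Rightarrow> complex"
  assumes h1: "\<And>y x a b i j. (\<Sum>z\<in>UNIV. R y z a b * V z x i j)
                 = (\<Sum>z\<in>UNIV. \<Sum>k\<in>UNIV. \<Sum>c\<in>UNIV. V y z i k * R z x a c * U c b k j)"
    and h2: "\<And>x i j. (\<Sum>y\<in>UNIV. e y * V y x i j) = (if i = j then e x else 0)"
    and h3: "\<And>y a b. (\<Sum>x\<in>UNIV. R y x a b * u x) = (if a = b then u y else 0)"
    and hl: "length as = Suc m" "length is = Suc m" "length bs = Suc m" "length js = Suc m"
  shows "chain e (RVs R V as is bs js) u =
    (\<Sum>cs\<in>{cs. length cs = m}. \<Sum>ks\<in>{ks. length ks = m}.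
       chain e (RVs R V (butlast as) (tl is) cs ks) u *
       (\<Prod>t<Suc m. U ((cs @ [last as]) ! t) (bs ! t) ((hd is # ks) ! t) (js ! t)))"
proof -
  obtain as' a where ea: "as = as' @ [a]" "length as' = m"
    using hl(1) by (metis append_butlast_last_id diff_Suc_1 length_butlast length_greater_0_conv zero_less_Suc)
  obtain i is' where ei: "is = i # is'" "length is' = m" using hl(2) by (metis length_Suc_conv)
  let ?P = "\<lambda>cs ks. (\<Prod>t<Suc m. U (cs ! t) (bs ! t) (ks ! t) (js ! t))"
  have "chain e (RVs R V as is bs js) u =
    (\<Sum>cs\<in>{cs. length cs = Suc m}. \<Sum>ks\<in>{ks. length ks = Suc m}.
       chain e (VRs R V is ks as cs) u * ?P cs ks)"
    using RV_expand[OF h1, where w=e and v=u and as=as and bs=bs and js=js] hl by simp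
  also have "\<dots> = (\<Sum>c\<in>UNIV. \<Sum>cs\<in>{cs. length cs = m}. \<Sum>k\<in>UNIV. \<Sum>ks\<in>{ks. length ks = m}.
       chain e (VRs R V is (k # ks) as (cs @ [c])) u * ?P (cs @ [c]) (k # ks))"
    by (simp only: sum_len_snoc[where 'a='r] sum_len_Suc[where 'a='v])
  also have "\<dots> = (\<Sum>c\<in>UNIV. \<Sum>cs\<in>{cs. length cs = m}. \<Sum>k\<in>UNIV. \<Sum>ks\<in>{ks. length ks = m}.
       if c = a then if k = i then chain e (RVs R V as' is' cs ks) u * ?P (cs @ [c]) (k # ks) else 0 else 0)"
  proof (intro sum.cong refl)
    fix c cs k ks assume "cs \<in> {cs::'r list. length cs = m}" "ks \<in> {ks::'v list. length ks = m}"
    then have "VRs R V is (k # ks) as (cs @ [c]) = (\<lambda>y x. V y x i k) # RVs R V as' is' cs ks @ [(\<lambda>y x. R y x a c)]"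
      unfolding ea ei by (intro VRs_snoc) (auto simp: ea ei)
    then show "chain e (VRs R V is (k # ks) as (cs @ [c])) u * ?P (cs @ [c]) (k # ks) =
      (if c = a then if k = i then chain e (RVs R V as' is' cs ks) u * ?P (cs @ [c]) (k # ks) else 0 else 0)"
      by (simp only: chain_collapse[OF h2 h3]) simp
  qed
  also have "\<dots> = (\<Sum>cs\<in>{cs. length cs = m}. \<Sum>ks\<in>{ks. length ks = m}.
       chain e (RVs R V as' is' cs ks) u * ?P (cs @ [a]) (i # ks))"
    by (simp only: sum_if_out) (simp add: sum.delta)
  finally show ?thesis by (simp add: ea ei)
qed



theorem mainTheorem2:
  fixes U :: "'r::finite \<Rightarrow> 'r \<Rightarrow> 'v::finite \<Rightarrow> 'v \<Rightarrow> complex"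
    and R :: "'x::finite \<Rightarrow> 'x \<Rightarrow> 'r \<Rightarrow> 'r \<Rightarrow> complex"
    and V :: "'x \<Rightarrow> 'x \<Rightarrow> 'v \<Rightarrow> 'v \<Rightarrow> complex"
    and e u :: "'x \<Rightarrow> complex"
  assumes h1: "\<And>y x a b i j. (\<Sum>z\<in>UNIV. R y z a b * V z x i j)
                 = (\<Sum>z\<in>UNIV. \<Sum>k\<in>UNIV. \<Sum>c\<in>UNIV. V y z i k * R z x a c * U c b k j)"
    and h2: "\<And>x i j. (\<Sum>y\<in>UNIV. e y * V y x i j) = (if i = j then e x else 0)"
    and h3: "\<And>y a b. (\<Sum>x\<in>UNIV. R y x a b * u x) = (if a = b then u y else 0)"
    and h4: "(\<Sum>x\<in>UNIV. e x * u x) = 1"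
    and hn: "n \<ge> 1"
    and hl: "length as = n" "length is = n" "length bs = n" "length js = n"
  shows "M e R V u n as is bs js = T U n as is bs js"
proof -
  have main: "\<forall>as is bs js. length as = Suc m \<longrightarrow> length is = Suc m \<longrightarrow> length bs = Suc m \<longrightarrow>
      length js = Suc m \<longrightarrow> chain e (RVs R V as is bs js) u = T U (Suc m) as is bs js" for m
  proof (induction m)
    case 0
    show ?case
    proof (intro allI impI)
      fix as :: "'r list" and "is" :: "'v list" and bs :: "'r list" and js :: "'v list"
      assume l: "length as = Suc 0" "length is = Suc 0" "length bs = Suc 0" "length js = Suc 0"
      have e1: "{cs::'r list. length cs = 0} = {[]}" by auto
      have e2: "{cs::'v list. length cs = 0} = {[]}" by auto
      obtain a0 where a0: "as = [a0]" using l(1) by (metis length_0_conv length_Suc_conv)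
      obtain i0 where i0: "is = [i0]" using l(2) by (metis length_0_conv length_Suc_conv)
      have "butlast as = []" "tl is = []" "last as = as ! 0" "hd is = is ! 0"
        by (simp_all add: a0 i0)
      then show "chain e (RVs R V as is bs js) u = T U (Suc 0) as is bs js"
        using step[OF h1 h2 h3 l] by (simp add: e1 e2 h4)
    qed
  next
    case (Suc m)
    show ?case
    proof (intro allI impI)
      fix as :: "'r list" and "is" :: "'v list" and bs :: "'r list" and js :: "'v list"
      assume l: "length as = Suc (Suc m)" "length is = Suc (Suc m)" "length bs = Suc (Suc m)" "length js = Suc (Suc m)"
      have f: "butlast as = take (Suc m) as" "last as = as ! Suc m" "hd is = is ! 0"
      proof -
        have ne: "as \<noteq> []" "is \<noteq> []" using l by auto
        show "butlast as = take (Suc m) as" using l by (simp add: butlast_conv_take)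
        show "last as = as ! Suc m" using l last_conv_nth[OF ne(1)] by simp
        show "hd is = is ! 0" using hd_conv_nth[OF ne(2)] by simp
      qed
      show "chain e (RVs R V as is bs js) u = T U (Suc (Suc m)) as is bs js"
        unfolding step[OF h1 h2 h3 l] T.simps(3)
      proof (intro sum.cong refl)
        fix cs ks assume "cs \<in> {cs::'r list. length cs = Suc m}" "ks \<in> {ks::'v list. length ks = Suc m}"
        then have "chain e (RVs R V (butlast as) (tl is) cs ks) u = T U (Suc m) (butlast as) (tl is) cs ks"
          using Suc.IH l by simp
        then show "chain e (RVs R V (butlast as) (tl is) cs ks) u *
          (\<Prod>t<Suc (Suc m). U ((cs @ [last as]) ! t) (bs ! t) ((hd is # ks) ! t) (js ! t)) =
          T U (Suc m) (take (Suc m) as) (tl is) cs ks *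
          (\<Prod>t<Suc (Suc m). U ((cs @ [as ! Suc m]) ! t) (bs ! t) ((is ! 0 # ks) ! t) (js ! t))"
          by (simp only: f)
      qed
    qed
  qed
  obtain m where "n = Suc m" using hn by (cases n) auto
  then show ?thesis using M_chain[OF hl, of e R V u] main[of m] hl by simp
qed

end
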